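(* Let $K$ be a field (e.g. $K=\mathbb{C}$), let $r\geqslant 0$ be an integer, and let $\{a_0(n)\}_{n\in\mathbb{Z}},\ldots,\{a_r(n)\}_{n\in\mathbb{Z}}$ be arbitrary sequences of elements of $K$. Let $V$ be the $K$-vector space of all sequences $\{x(n)\}_{n\in\mathbb{Z}}$ of elements of $K$ satisfying \[ a_r(n)x(n+r)+\ldots+a_1(n)x(n+1)+a_0(n)x(n)=0\quad\text{for every } n\in\mathbb{Z}. \] Assume $\dim_K V=\infty$. Then there exists a ray $\mathcal{S}\subseteq\mathbb{Z}$, i.e. a set of the form $\{i\in\mathbb{Z}\mid i\geqslant i_0\}$ or $\{i\in\mathbb{Z}\mid i\leqslant i_0\}$ for some $i_0\in\mathbb{Z}$, such that the subspace of $V$ consisting of the sequences whose support is contained in $\mathcal{S}$ is infinite-dimensional.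
   Context: The support of a sequence $\{x(n)\}_{n\in\mathbb{Z}}$ is $\{i\in\mathbb{Z}\mid x(i)\neq 0\}$. *)

theory Defs
  imports "HOL-Analysis.Analysis" "HOL-Library.Function_Algebras"
begin

definition seq_scale :: "'a::field \<Rightarrow> (int \<Rightarrow> 'a) \<Rightarrow> (int \<Rightarrow> 'a)" where
  "seq_scale c x = (\<lambda>n. c * x n)"

definition supp_seq :: "(int \<Rightarrow> 'a::zero) \<Rightarrow> int set" where
  "supp_seq x = {i. x i \<noteq> 0}"

definition sol_space :: "nat \<Rightarrow> (nat \<Rightarrow> int \<Rightarrow> 'a::field) \<Rightarrow> (int \<Rightarrow> 'a) set" where
  "sol_space r a = {x. \<forall>n. (\<Sum>k\<le>r. a k n * x (n + int k)) = 0}"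

definition inf_dim :: "(int \<Rightarrow> 'a::field) set \<Rightarrow> bool" where
  "inf_dim W \<longleftrightarrow> \<not> (\<exists>B. finite B \<and> B \<subseteq> W \<and> module.span seq_scale B = W)"

definition is_ray :: "int set \<Rightarrow> bool" where
  "is_ray S \<longleftrightarrow> (\<exists>i0. S = {i. i \<ge> i0} \<or> S = {i. i \<le> i0})"

end

theory Submission
  imports Defs
begin

lemma seq_module: "module (seq_scale :: 'a::field \<Rightarrow> (int \<Rightarrow> 'a) \<Rightarrow> _)"
  by unfold_locales (auto simp: seq_scale_def algebra_simps)

interpretation M: module "seq_scale :: 'a::field \<Rightarrow> (int \<Rightarrow> 'a) \<Rightarrow> _"
  by (rule seq_module)

definition fs :: "(int \<Rightarrow> 'a::field) set \<Rightarrow> bool" where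
  "fs W \<longleftrightarrow> (\<exists>B. finite B \<and> B \<subseteq> W \<and> M.span B = W)"

lemma sol_subspace: "M.subspace (sol_space r a)"
proof (rule M.subspaceI)
  show "0 \<in> sol_space r a" by (simp add: sol_space_def)
next
  fix x y assume "x \<in> sol_space r a" "y \<in> sol_space r a"
  then show "x + y \<in> sol_space r a"
    by (simp add: sol_space_def distrib_left sum.distrib)
next
  fix c x assume "x \<in> sol_space r a"
  then have "(\<Sum>k\<le>r. a k n * (c * x (n + int k))) = 0" for n
    by (simp add: sol_space_def sum_distrib_left[symmetric] mult.left_commute)
  then show "seq_scale c x \<in> sol_space r a"
    by (simp add: sol_space_def seq_scale_def)
qed

lemma sub_zero_subspace:
  assumes "M.subspace U" shows "M.subspace {x\<in>U. x i = (0::'a::field)}"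
  using assms unfolding M.subspace_def by (auto simp: seq_scale_def)

lemma fs_step:
  assumes U: "M.subspace U" and f: "fs {x\<in>U. x i = (0::'a::field)}"
  shows "fs U"
proof (cases "\<forall>x\<in>U. x i = 0")
  case True
  then have "{x\<in>U. x i = 0} = U" by auto
  then show ?thesis using f by simp
next
  case False
  then obtain u where u: "u \<in> U" "u i \<noteq> 0" by auto
  from f obtain B where B: "finite B" "B \<subseteq> {x\<in>U. x i = 0}" "M.span B = {x\<in>U. x i = 0}"
    unfolding fs_def by blast
  have "M.span (insert u B) = U"
  proof (rule M.span_subspace)
    show "insert u B \<subseteq> U" using B u by auto
    show "M.subspace U" by (rule U)
    show "U \<subseteq> M.span (insert u B)"
    proof
      fix x assume x: "x \<in> U"
      define c where "c = x i / u i"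
      have "x - seq_scale c u \<in> U"
        using x u U M.subspace_diff M.subspace_scale by blast
      moreover have "(x - seq_scale c u) i = 0" using u by (simp add: c_def seq_scale_def)
      ultimately have "x - seq_scale c u \<in> M.span B" using B by auto
      then have "x - seq_scale c u \<in> M.span (insert u B)"
        using M.span_mono[of B "insert u B"] by auto
      moreover have "seq_scale c u \<in> M.span (insert u B)"
        by (intro M.span_scale M.span_base) simp
      ultimately have "(x - seq_scale c u) + seq_scale c u \<in> M.span (insert u B)"
        by (rule M.span_add)
      then show "x \<in> M.span (insert u B)" by simp
    qed
  qed
  then show ?thesis unfolding fs_def using B u by (intro exI[of _ "insert u B"]) auto
qed

definition Uk :: "nat \<Rightarrow> (nat \<Rightarrow> int \<Rightarrow> 'a::field) \<Rightarrow> nat \<Rightarrow> (int \<Rightarrow> 'a) set" where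
  "Uk r a k = {x \<in> sol_space r a. \<forall>j<k. x (int j) = 0}"

lemma Uk_subspace: "M.subspace (Uk r a k)"
proof (induction k)
  case 0
  then show ?case using sol_subspace by (simp add: Uk_def)
next
  case (Suc k)
  have "Uk r a (Suc k) = {x \<in> Uk r a k. x (int k) = 0}"
    by (auto simp: Uk_def less_Suc_eq)
  then show ?case using sub_zero_subspace[OF Suc] by simp
qed

lemma Uk_Suc: "Uk r a (Suc k) = {x \<in> Uk r a k. x (int k) = 0}"
  by (auto simp: Uk_def less_Suc_eq)

lemma fs_Uk_down:
  assumes "fs (Uk r a r)" shows "d \<le> r \<Longrightarrow> fs (Uk r a (r - d))"
proof (induction d)
  case 0 then show ?case using assms by simp
next
  case (Suc d)
  then have e: "r - d = Suc (r - Suc d)" by simp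
  have "fs (Uk r a (Suc (r - Suc d)))" using Suc e by simp
  then show ?case using fs_step[OF Uk_subspace] by (simp add: Uk_Suc)
qed

theorem lemma1:
  fixes r :: nat and a :: "nat \<Rightarrow> int \<Rightarrow> 'a::field"
  assumes "inf_dim (sol_space r a)"
  shows "\<exists>S. is_ray S \<and> inf_dim {x \<in> sol_space r a. supp_seq x \<subseteq> S}"
proof (rule ccontr)
  assume H: "\<not> ?thesis"
  define P where "P = {x \<in> sol_space r a. supp_seq x \<subseteq> {i. i \<ge> int r}}"
  define N where "N = {x \<in> sol_space r a. supp_seq x \<subseteq> {i. i \<le> -1}}"
  have "is_ray {i. i \<ge> int r}" "is_ray {i::int. i \<le> -1}" unfolding is_ray_def by blast+
  then have "\<not> inf_dim P" "\<not> inf_dim N" using H unfolding P_def N_def by blast+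
  then have "fs P" "fs N" unfolding inf_dim_def fs_def by blast+
  then obtain BP BN where BP: "finite BP" "BP \<subseteq> P" "M.span BP = P"
    and BN: "finite BN" "BN \<subseteq> N" "M.span BN = N" unfolding fs_def by blast
  have PU: "P \<subseteq> Uk r a r" unfolding P_def Uk_def supp_seq_def by (auto simp: subset_eq)
  have NU: "N \<subseteq> Uk r a r" unfolding N_def Uk_def supp_seq_def by (auto simp: subset_eq)
  have "M.span (BP \<union> BN) = Uk r a r"
  proof (rule M.span_subspace)
    show "BP \<union> BN \<subseteq> Uk r a r" using BP BN PU NU by auto
    show "M.subspace (Uk r a r)" by (rule Uk_subspace)
    show "Uk r a r \<subseteq> M.span (BP \<union> BN)"
    proof
      fix x assume x: "x \<in> Uk r a r"
      then have xs: "x \<in> sol_space r a" and x0: "\<And>i. 0 \<le> i \<Longrightarrow> i < int r \<Longrightarrow> x i = 0"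
      proof -
        show "x \<in> sol_space r a" using x by (simp add: Uk_def)
        fix i :: int assume "0 \<le> i" "i < int r"
        then obtain j where "i = int j" "j < r" by (metis nonneg_int_cases of_nat_less_iff)
        then show "x i = 0" using x by (simp add: Uk_def)
      qed
      define xp where "xp = (\<lambda>i. if i \<ge> int r then x i else 0)"
      define xn where "xn = (\<lambda>i. if i < 0 then x i else 0)"
      have sum: "x = xp + xn"
      proof
        fix i show "x i = (xp + xn) i" using x0[of i] by (auto simp: xp_def xn_def)
      qed
      have "xp \<in> sol_space r a" unfolding sol_space_def
      proof (intro CollectI allI)
        fix n
        show "(\<Sum>k\<le>r. a k n * xp (n + int k)) = 0"
        proof (cases "n < 0")
          case True
          then show ?thesis by (auto intro!: sum.neutral simp: xp_def)
        next
          case False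
          then have "(\<Sum>k\<le>r. a k n * xp (n + int k)) = (\<Sum>k\<le>r. a k n * x (n + int k))"
            by (intro sum.cong) (auto simp: xp_def x0)
          then show ?thesis using xs by (simp add: sol_space_def)
        qed
      qed
      then have "xp \<in> P" unfolding P_def supp_seq_def by (auto simp: xp_def split: if_splits)
      then have p: "xp \<in> M.span (BP \<union> BN)" using BP M.span_mono[of BP "BP \<union> BN"] by auto
      have "xn \<in> sol_space r a" unfolding sol_space_def
      proof (intro CollectI allI)
        fix n
        show "(\<Sum>k\<le>r. a k n * xn (n + int k)) = 0"
        proof (cases "n < 0")
          case False
          then show ?thesis by (auto intro!: sum.neutral simp: xn_def)
        next
          case True
          then have "(\<Sum>k\<le>r. a k n * xn (n + int k)) = (\<Sum>k\<le>r. a k n * x (n + int k))"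
            by (intro sum.cong) (auto simp: xn_def x0)
          then show ?thesis using xs by (simp add: sol_space_def)
        qed
      qed
      then have "xn \<in> N" unfolding N_def supp_seq_def by (auto simp: xn_def split: if_splits)
      then have n: "xn \<in> M.span (BP \<union> BN)" using BN M.span_mono[of BN "BP \<union> BN"] by auto
      show "x \<in> M.span (BP \<union> BN)" using M.span_add[OF p n] sum by simp
    qed
  qed
  then have "fs (Uk r a r)" unfolding fs_def using BP BN PU NU
    by (intro exI[of _ "BP \<union> BN"]) auto
  from fs_Uk_down[OF this, of r] have "fs (Uk r a 0)" by simp
  moreover have "Uk r a 0 = sol_space r a" by (simp add: Uk_def)
  ultimately show False using assms unfolding inf_dim_def fs_def by auto
qed

end
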